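(* Let $k$ be a number field with ring of integers $\mathcal{O}_k$, $\mathcal{A}$ a quaternion algebra over $k$, $\mathcal{O}\subset\mathcal{A}$ an order, and $I\subset\mathcal{O}_k$ an ideal. For any $\gamma\in\mathcal{O}^1(I)$ we have $\mathrm{tr}(\gamma)\equiv 2 \pmod{I^2}$.
   Context: $\mathrm{tr}$ denotes the reduced trace of $\mathcal{A}$, $\mathcal{O}^1$ the group of elements of $\mathcal{O}$ of reduced norm one, $I\mathcal{O}=\{\sum_j t_jw_j: t_j\in I,\ w_j\in\mathcal{O}\}$, and $\mathcal{O}^1(I)=\{\gamma\in\mathcal{O}^1:\gamma-1\in I\mathcal{O}\}$. *)

theory Defs
  imports "HOL-Computational_Algebra.Polynomial"
begin

definition number_field :: "'k::field_char_0 itself \<Rightarrow> bool" where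
  "number_field _ \<longleftrightarrow> (\<exists>B :: 'k set. finite B \<and>
      (\<forall>x::'k. \<exists>c. x = (\<Sum>b\<in>B. of_rat (c b) * b)))"

definition ring_of_integers :: "('k::field_char_0) set" where
  "ring_of_integers = {x. algebraic_int x}"

definition ok_ideal :: "('k::field_char_0) set \<Rightarrow> bool" where
  "ok_ideal I \<longleftrightarrow> I \<subseteq> ring_of_integers \<and> 0 \<in> I \<and>
     (\<forall>x\<in>I. \<forall>y\<in>I. x + y \<in> I) \<and>
     (\<forall>r\<in>ring_of_integers. \<forall>x\<in>I. r * x \<in> I)"

definition ideal_prod :: "('k::comm_ring_1) set \<Rightarrow> 'k set \<Rightarrow> 'k set" where
  "ideal_prod I J = {\<Sum>i<n. t i * s i | (n::nat) t s. \<forall>i<n. t i \<in> I \<and> s i \<in> J}"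

(* Quaternion algebra (a,b)_k with basis 1, i, j, ij; i^2 = a, j^2 = b, ij = -ji *)
datatype 'k quat = Quat 'k 'k 'k 'k

fun qadd :: "('k::field) quat \<Rightarrow> 'k quat \<Rightarrow> 'k quat" where
  "qadd (Quat x0 x1 x2 x3) (Quat y0 y1 y2 y3) = Quat (x0+y0) (x1+y1) (x2+y2) (x3+y3)"

fun qneg :: "('k::field) quat \<Rightarrow> 'k quat" where
  "qneg (Quat x0 x1 x2 x3) = Quat (-x0) (-x1) (-x2) (-x3)"

fun qscale :: "'k::field \<Rightarrow> 'k quat \<Rightarrow> 'k quat" where
  "qscale c (Quat x0 x1 x2 x3) = Quat (c*x0) (c*x1) (c*x2) (c*x3)"

definition qzero :: "('k::field) quat" where "qzero = Quat 0 0 0 0"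
definition qone :: "('k::field) quat" where "qone = Quat 1 0 0 0"

fun qmul :: "'k::field \<Rightarrow> 'k \<Rightarrow> 'k quat \<Rightarrow> 'k quat \<Rightarrow> 'k quat" where
  "qmul a b (Quat x0 x1 x2 x3) (Quat y0 y1 y2 y3) =
     Quat (x0*y0 + a*x1*y1 + b*x2*y2 - a*b*x3*y3)
          (x0*y1 + x1*y0 - b*x2*y3 + b*x3*y2)
          (x0*y2 + x2*y0 + a*x1*y3 - a*x3*y1)
          (x0*y3 + x3*y0 + x1*y2 - x2*y1)"

definition qsum :: "('i \<Rightarrow> ('k::field) quat) \<Rightarrow> 'i set \<Rightarrow> 'k quat" where
  "qsum f S = Finite_Set.fold (\<lambda>i acc. qadd (f i) acc) qzero S"

fun qtr :: "('k::field) quat \<Rightarrow> 'k" where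
  "qtr (Quat x0 x1 x2 x3) = 2 * x0"

fun qnrm :: "'k::field \<Rightarrow> 'k \<Rightarrow> 'k quat \<Rightarrow> 'k" where
  "qnrm a b (Quat x0 x1 x2 x3) = x0^2 - a*x1^2 - b*x2^2 + a*b*x3^2"

definition is_order :: "'k::field_char_0 \<Rightarrow> 'k \<Rightarrow> 'k quat set \<Rightarrow> bool" where
  "is_order a b \<O> \<longleftrightarrow>
     qone \<in> \<O> \<and> qzero \<in> \<O> \<and>
     (\<forall>x\<in>\<O>. \<forall>y\<in>\<O>. qadd x y \<in> \<O> \<and> qmul a b x y \<in> \<O>) \<and>
     (\<forall>x\<in>\<O>. qneg x \<in> \<O>) \<and>
     (\<forall>r\<in>ring_of_integers. \<forall>x\<in>\<O>. qscale r x \<in> \<O>) \<and>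
     (\<exists>G. finite G \<and> G \<subseteq> \<O> \<and>
        \<O> = {qsum (\<lambda>g. qscale (c g) g) G | c. \<forall>g\<in>G. c g \<in> ring_of_integers}) \<and>
     (\<forall>x::'k quat. \<exists>G c. finite G \<and> G \<subseteq> \<O> \<and> x = qsum (\<lambda>g. qscale (c g) g) G)"

definition ideal_times_order :: "('k::field) set \<Rightarrow> 'k quat set \<Rightarrow> 'k quat set" where
  "ideal_times_order I \<O> =
     {qsum (\<lambda>j. qscale (t j) (w j)) {..<n} | (n::nat) t w. \<forall>j<n. t j \<in> I \<and> w j \<in> \<O>}"

definition order_norm_one_level :: "'k::field \<Rightarrow> 'k \<Rightarrow> 'k quat set \<Rightarrow> 'k set \<Rightarrow> 'k quat set" where
  "order_norm_one_level a b \<O> I =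
     {\<gamma>\<in>\<O>. qnrm a b \<gamma> = 1 \<and> qadd \<gamma> (qneg qone) \<in> ideal_times_order I \<O>}"

end

theory Submission
  imports Defs "Jordan_Normal_Form.Char_Poly"
begin


fun q0 :: "'k quat \<Rightarrow> 'k" where "q0 (Quat x0 x1 x2 x3) = x0"
fun q1 :: "'k quat \<Rightarrow> 'k" where "q1 (Quat x0 x1 x2 x3) = x1"
fun q2 :: "'k quat \<Rightarrow> 'k" where "q2 (Quat x0 x1 x2 x3) = x2"
fun q3 :: "'k quat \<Rightarrow> 'k" where "q3 (Quat x0 x1 x2 x3) = x3"

lemma quat_eqI: "q0 x = q0 y \<Longrightarrow> q1 x = q1 y \<Longrightarrow> q2 x = q2 y \<Longrightarrow> q3 x = q3 y \<Longrightarrow> x = y"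
  by (cases x; cases y) auto

instantiation quat :: (field) ab_group_add
begin
definition zero_quat_def: "0 = qzero"
definition plus_quat_def: "x + y = qadd x y"
definition uminus_quat_def: "- x = qneg x"
definition minus_quat_def: "(x::'a quat) - y = qadd x (qneg y)"
instance
proof
  fix x y z :: "'a quat"
  show "x + y + z = x + (y + z)" unfolding plus_quat_def
    by (cases x; cases y; cases z) (simp add: algebra_simps)
  show "x + y = y + x" unfolding plus_quat_def
    by (cases x; cases y) (simp add: algebra_simps)
  show "0 + x = x" unfolding plus_quat_def zero_quat_def qzero_def
    by (cases x) simp
  show "- x + x = 0" unfolding plus_quat_def zero_quat_def qzero_def uminus_quat_def
    by (cases x) simp
  show "x - y = x + - y" unfolding plus_quat_def minus_quat_def uminus_quat_def by simp
qed
end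

lemma q_comp_simps[simp]:
  fixes x y :: "'k::field quat"
  shows "q0 (x + y) = q0 x + q0 y" "q1 (x + y) = q1 x + q1 y"
    "q2 (x + y) = q2 x + q2 y" "q3 (x + y) = q3 x + q3 y"
    "q0 (- x) = - q0 x" "q1 (- x) = - q1 x" "q2 (- x) = - q2 x" "q3 (- x) = - q3 x"
    "q0 0 = 0" "q1 0 = 0" "q2 0 = 0" "q3 0 = 0"
    "q0 (qscale c x) = c * q0 x" "q1 (qscale c x) = c * q1 x"
    "q2 (qscale c x) = c * q2 x" "q3 (qscale c x) = c * q3 x"
  by (cases x; cases y; simp add: plus_quat_def uminus_quat_def zero_quat_def qzero_def)+

lemma q_comp_sum[simp]:
  fixes f :: "'i \<Rightarrow> 'k::field quat"
  shows "q0 (sum f S) = (\<Sum>s\<in>S. q0 (f s))" "q1 (sum f S) = (\<Sum>s\<in>S. q1 (f s))"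
    "q2 (sum f S) = (\<Sum>s\<in>S. q2 (f s))" "q3 (sum f S) = (\<Sum>s\<in>S. q3 (f s))"
  by (induction S rule: infinite_finite_induct; simp)+

lemma qscale_sum: "qscale c (sum f S) = (\<Sum>s\<in>S. qscale c (f s))"
  by (rule quat_eqI) (simp_all add: sum_distrib_left)

lemma qscale_add: "qscale c (x + y) = qscale c x + qscale c y"
  by (rule quat_eqI) (simp_all add: algebra_simps)

lemma qscale_qscale: "qscale c (qscale d x) = qscale (c * d) x"
  by (rule quat_eqI) (simp_all add: algebra_simps)

lemma qscale_one: "qscale 1 x = x"
  by (rule quat_eqI) (simp_all add: algebra_simps)

lemma qscale_zero: "qscale 0 x = 0" "qscale c 0 = 0"
  by (rule quat_eqI; simp)+

lemma qscale_minus: "qscale (- c) x = - qscale c x"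
  by (rule quat_eqI) (simp_all add: algebra_simps)

lemma qscale_plus: "qscale (c + d) x = qscale c x + qscale d x"
  by (rule quat_eqI) (simp_all add: algebra_simps)

lemma qmul_comps[simp]:
  "q0 (qmul a b x y) = q0 x * q0 y + a * q1 x * q1 y + b * q2 x * q2 y - a * b * q3 x * q3 y"
  "q1 (qmul a b x y) = q0 x * q1 y + q1 x * q0 y - b * q2 x * q3 y + b * q3 x * q2 y"
  "q2 (qmul a b x y) = q0 x * q2 y + q2 x * q0 y + a * q1 x * q3 y - a * q3 x * q1 y"
  "q3 (qmul a b x y) = q0 x * q3 y + q3 x * q0 y + q1 x * q2 y - q2 x * q1 y"
  by (cases x; cases y; simp)+

lemma qmul_sum_left: "qmul a b (sum f S) y = (\<Sum>s\<in>S. qmul a b (f s) y)"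
  by (rule quat_eqI) (simp_all add: sum_distrib_left sum_distrib_right sum_subtractf sum.distrib algebra_simps)

lemma qmul_sum_right: "qmul a b y (sum f S) = (\<Sum>s\<in>S. qmul a b y (f s))"
  by (rule quat_eqI) (simp_all add: sum_distrib_left sum_distrib_right sum_subtractf sum.distrib algebra_simps)

lemma qmul_scale_left: "qmul a b (qscale c x) y = qscale c (qmul a b x y)"
  by (rule quat_eqI) (simp_all add: algebra_simps)

lemma qmul_scale_right: "qmul a b x (qscale c y) = qscale c (qmul a b x y)"
  by (rule quat_eqI) (simp_all add: algebra_simps)

fun qconj :: "'k::field quat \<Rightarrow> 'k quat" where
  "qconj (Quat x0 x1 x2 x3) = Quat x0 (-x1) (-x2) (-x3)"

lemma qconj_comps[simp]: "q0 (qconj x) = q0 x" "q1 (qconj x) = - q1 x"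
  "q2 (qconj x) = - q2 x" "q3 (qconj x) = - q3 x"
  by (cases x; simp)+

lemma qconj_sum: "qconj (sum f S) = (\<Sum>s\<in>S. qconj (f s))"
  by (rule quat_eqI) (simp_all add: sum_negf)

lemma qconj_scale: "qconj (qscale c x) = qscale c (qconj x)"
  by (rule quat_eqI) simp_all

lemma qnrm_comps: "qnrm a b x = q0 x ^ 2 - a * q1 x ^ 2 - b * q2 x ^ 2 + a * b * q3 x ^ 2"
  by (cases x) simp

lemma key_identity:
  "qmul a b (qconj (qmul a b w g)) (qmul a b w h) = qscale (qnrm a b w) (qmul a b (qconj g) h)"
  by (rule quat_eqI) (simp_all add: qnrm_comps power2_eq_square algebra_simps)

lemma qsum_eq:
  assumes "finite S" shows "qsum f S = sum f S"
proof -
  interpret comp_fun_commute "\<lambda>i acc. qadd (f i) acc"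
  proof
    fix x y show "(\<lambda>acc. qadd (f y) acc) \<circ> (\<lambda>acc. qadd (f x) acc) = (\<lambda>acc. qadd (f x) acc) \<circ> (\<lambda>acc. qadd (f y) acc)"
      using add.left_commute[of "f y" "f x"] by (auto simp: plus_quat_def)
  qed
  from assms show ?thesis unfolding qsum_def
    by (induction S rule: finite_induct) (auto simp: plus_quat_def zero_quat_def)
qed


definition Zspan :: "'k::field quat set \<Rightarrow> 'k quat set" where
  "Zspan S = {\<Sum>s\<in>S. qscale (of_int (m s)) s | m. True}"

lemma ZspanI: "x = (\<Sum>s\<in>S. qscale (of_int (m s)) s) \<Longrightarrow> x \<in> Zspan S"
  unfolding Zspan_def by auto

lemma Z_mem: assumes "finite S" "s \<in> S" shows "s \<in> Zspan S"
proof -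
  have "(\<Sum>t\<in>S. qscale (of_int (if t = s then 1 else 0)) t) = (\<Sum>t\<in>S. if t = s then t else 0)"
    by (rule sum.cong) (auto simp: qscale_one qscale_zero)
  also have "\<dots> = s" using assms by simp
  finally show ?thesis by (rule ZspanI[OF sym])
qed

lemma Z_zero: "0 \<in> Zspan S"
proof -
  have "(\<Sum>t\<in>S. qscale (of_int 0) t) = 0" by (simp add: qscale_zero)
  thus ?thesis by (rule ZspanI[OF sym])
qed

lemma Z_add: assumes "x \<in> Zspan S" "y \<in> Zspan S" shows "x + y \<in> Zspan S"
proof -
  obtain m m' where "x = (\<Sum>s\<in>S. qscale (of_int (m s)) s)" "y = (\<Sum>s\<in>S. qscale (of_int (m' s)) s)"
    using assms unfolding Zspan_def by blast
  hence "x + y = (\<Sum>s\<in>S. qscale (of_int (m s + m' s)) s)"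
    by (simp add: sum.distrib[symmetric] qscale_plus)
  thus ?thesis by (rule ZspanI)
qed

lemma Z_int: assumes "x \<in> Zspan S" shows "qscale (of_int k) x \<in> Zspan S"
proof -
  obtain m where "x = (\<Sum>s\<in>S. qscale (of_int (m s)) s)"
    using assms unfolding Zspan_def by blast
  hence "qscale (of_int k) x = (\<Sum>s\<in>S. qscale (of_int (k * m s)) s)"
    by (simp add: qscale_sum qscale_qscale)
  thus ?thesis by (rule ZspanI)
qed

lemma Z_sum: assumes "\<forall>i\<in>A. f i \<in> Zspan S" shows "sum f A \<in> Zspan S"
  using assms by (induction A rule: infinite_finite_induct) (auto simp: Z_zero Z_add)

lemma Z_lin: assumes "z \<in> Zspan S" "\<forall>s\<in>S. qscale y s \<in> Zspan S'"
  shows "qscale y z \<in> Zspan S'"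
proof -
  obtain m where "z = (\<Sum>s\<in>S. qscale (of_int (m s)) s)"
    using assms unfolding Zspan_def by blast
  hence "qscale y z = (\<Sum>s\<in>S. qscale (of_int (m s)) (qscale y s))"
    by (simp add: qscale_sum qscale_qscale mult.commute)
  also have "\<dots> \<in> Zspan S'" using assms(2) by (intro Z_sum) (auto intro: Z_int)
  finally show ?thesis .
qed

lemma Z_mono: assumes "finite S'" "S \<subseteq> S'" "z \<in> Zspan S" shows "z \<in> Zspan S'"
  using Z_lin[OF assms(3), of 1 S'] assms Z_mem by (auto simp: qscale_one)




lemma eig_int_algebraic_int:
  fixes x :: "'k::field_char_0"
  assumes "A \<in> carrier_mat n n" and "u \<in> carrier_vec n" and "u \<noteq> 0\<^sub>v n"
    and "map_mat of_int A *\<^sub>v u = x \<cdot>\<^sub>v u"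
  shows "algebraic_int x"
proof -
  have "eigenvalue (map_mat (of_int :: int \<Rightarrow> 'k) A) x"
    unfolding eigenvalue_def eigenvector_def using assms by auto
  hence "poly (char_poly (map_mat (of_int :: int \<Rightarrow> 'k) A)) x = 0"
    using eigenvalue_root_char_poly[of "map_mat (of_int :: int \<Rightarrow> 'k) A" n] assms(1) by auto
  moreover have "char_poly (map_mat (of_int :: int \<Rightarrow> 'k) A) = map_poly of_int (char_poly A)"
    by (rule of_int_hom.char_poly_hom[OF assms(1)])
  moreover have "lead_coeff (char_poly A) = 1"
    using degree_monic_char_poly[OF assms(1)] by simp
  ultimately show ?thesis unfolding algebraic_int_altdef_ipoly by auto
qed

lemma coord_algebraic_int:
  fixes x :: "'k::field_char_0" and f :: "'k quat \<Rightarrow> 'k"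
  assumes fin: "finite S" and cl: "\<forall>s\<in>S. qscale x s \<in> Zspan S"
    and flin: "\<And>g (T :: 'k quat set). f (sum g T) = (\<Sum>t\<in>T. f (g t))" "\<And>c y. f (qscale c y) = c * f y"
    and nz: "s0 \<in> S" "f s0 \<noteq> 0"
  shows "algebraic_int x"
proof -
  obtain h where h: "bij_betw h {0..<card S} S" using ex_bij_betw_nat_finite[OF fin] by blast
  define n where "n = card S"
  have "\<forall>i. \<exists>m. i < n \<longrightarrow> qscale x (h i) = (\<Sum>s\<in>S. qscale (of_int (m s)) s)"
  proof
    fix i show "\<exists>m. i < n \<longrightarrow> qscale x (h i) = (\<Sum>s\<in>S. qscale (of_int (m s)) s)"
    proof (cases "i < n")
      case True
      hence "h i \<in> S" using h unfolding n_def bij_betw_def by auto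
      thus ?thesis using cl unfolding Zspan_def by auto
    qed auto
  qed
  then obtain M where M: "\<And>i. i < n \<Longrightarrow> qscale x (h i) = (\<Sum>s\<in>S. qscale (of_int (M i s)) s)"
    by metis
  define A where "A = mat n n (\<lambda>(i,j). M i (h j))"
  define u where "u = vec n (\<lambda>i. f (h i))"
  have A: "A \<in> carrier_mat n n" unfolding A_def by simp
  have u: "u \<in> carrier_vec n" unfolding u_def by simp
  obtain i0 where i0: "i0 < n" "h i0 = s0" using h nz(1) unfolding n_def bij_betw_def by force
  have "u $ i0 \<noteq> 0" using i0 nz(2) unfolding u_def by simp
  hence unz: "u \<noteq> 0\<^sub>v n" using i0 by auto
  have "map_mat of_int A *\<^sub>v u = x \<cdot>\<^sub>v u"
  proof (rule eq_vecI)
    fix i assume i: "i < dim_vec (x \<cdot>\<^sub>v u)"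
    hence i': "i < n" using u by simp
    have "(map_mat of_int A *\<^sub>v u) $ i = (\<Sum>j<n. of_int (M i (h j)) * f (h j))"
      using i' A u unfolding A_def u_def by (simp add: mult_mat_vec_def scalar_prod_def lessThan_atLeast0)
    also have "\<dots> = (\<Sum>s\<in>S. of_int (M i s) * f s)"
      using sum.reindex_bij_betw[OF h, of "\<lambda>s. of_int (M i s) * f s"]
      unfolding n_def lessThan_atLeast0 by simp
    also have "\<dots> = f (\<Sum>s\<in>S. qscale (of_int (M i s)) s)"
      using flin(1)[of "\<lambda>s. qscale (of_int (M i s)) s" S] flin(2) by simp
    also have "\<dots> = f (qscale x (h i))" using M[OF i'] by simp
    also have "\<dots> = (x \<cdot>\<^sub>v u) $ i" using i' flin unfolding u_def by simp
    finally show "(map_mat of_int A *\<^sub>v u) $ i = (x \<cdot>\<^sub>v u) $ i" .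
  qed (use u A in simp)
  thus ?thesis using eig_int_algebraic_int[OF A u unz] by blast
qed

lemma set_algebraic_int:
  fixes x :: "'k::field_char_0"
  assumes fin: "finite S" and cl: "\<forall>s\<in>S. qscale x s \<in> Zspan S"
    and nz: "s0 \<in> S" "s0 \<noteq> 0"
  shows "algebraic_int x"
proof -
  have "q0 s0 \<noteq> 0 \<or> q1 s0 \<noteq> 0 \<or> q2 s0 \<noteq> 0 \<or> q3 s0 \<noteq> 0"
    using nz(2) quat_eqI[of s0 0] by auto
  moreover have "q0 s0 \<noteq> 0 \<Longrightarrow> ?thesis" by (rule coord_algebraic_int[OF fin cl _ _ nz(1), of q0]) auto
  moreover have "q1 s0 \<noteq> 0 \<Longrightarrow> ?thesis" by (rule coord_algebraic_int[OF fin cl _ _ nz(1), of q1]) auto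
  moreover have "q2 s0 \<noteq> 0 \<Longrightarrow> ?thesis" by (rule coord_algebraic_int[OF fin cl _ _ nz(1), of q2]) auto
  moreover have "q3 s0 \<noteq> 0 \<Longrightarrow> ?thesis" by (rule coord_algebraic_int[OF fin cl _ _ nz(1), of q3]) auto
  ultimately show ?thesis by blast
qed




lemma extend_alg_int:
  fixes c :: "'k::field_char_0"
  assumes fin: "finite S" and c: "algebraic_int c"
  shows "\<exists>S'. finite S' \<and> S \<subseteq> S' \<and> (\<forall>s'\<in>S'. \<exists>i s. s \<in> S \<and> s' = qscale (c ^ i) s)
     \<and> (\<forall>s\<in>S'. qscale c s \<in> Zspan S')
     \<and> (\<forall>y. (\<forall>s\<in>S. qscale y s \<in> Zspan S) \<longrightarrow> (\<forall>s\<in>S'. qscale y s \<in> Zspan S'))"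
proof -
  obtain p where p: "poly (map_poly of_int p) c = 0" "lead_coeff p = 1"
    using c unfolding algebraic_int_altdef_ipoly by blast
  define d where "d = degree p"
  have d0: "d > 0"
  proof (rule ccontr)
    assume "\<not> d > 0"
    hence "d = 0" by simp
    hence "poly (map_poly (of_int::int\<Rightarrow>'k) p) c = of_int (lead_coeff p)"
      unfolding d_def by (simp add: poly_altdef degree_map_poly coeff_map_poly)
    thus False using p by simp
  qed
  have "poly (map_poly (of_int :: int \<Rightarrow> 'k) p) c = (\<Sum>i\<le>d. of_int (coeff p i) * c ^ i)"
    unfolding poly_altdef d_def by (simp add: coeff_map_poly degree_map_poly)
  also have "\<dots> = (\<Sum>i<d. of_int (coeff p i) * c ^ i) + c ^ d"
    using p(2) unfolding d_def by (simp add: lessThan_Suc_atMost[symmetric])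
  finally have cd: "c ^ d = (\<Sum>i<d. of_int (- coeff p i) * c ^ i)"
    using p(1) by (simp add: sum_negf eq_neg_iff_add_eq_0 add.commute)
  define S' where "S' = (\<lambda>(i, s). qscale (c ^ i) s) ` ({..<d} \<times> S)"
  have finS': "finite S'" unfolding S'_def using fin by simp
  have memS': "qscale (c ^ i) s \<in> S'" if "i < d" "s \<in> S" for i s
    unfolding S'_def using that by force
  have sub: "S \<subseteq> S'" using memS'[of 0] d0 by (auto simp: qscale_one)
  have gen: "\<forall>s'\<in>S'. \<exists>i s. s \<in> S \<and> s' = qscale (c ^ i) s" unfolding S'_def by auto
  have scl: "qscale (c ^ i) z \<in> Zspan S'" if "i < d" "z \<in> Zspan S" for i z
    using Z_lin[OF that(2)] memS'[OF that(1)] Z_mem[OF finS'] by blast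
  have cc: "\<forall>s\<in>S'. qscale c s \<in> Zspan S'"
  proof
    fix s' assume "s' \<in> S'"
    then obtain i s where isd: "i < d" "s \<in> S" "s' = qscale (c ^ i) s" unfolding S'_def by auto
    have eq: "qscale c s' = qscale (c ^ Suc i) s" using isd by (simp add: qscale_qscale)
    show "qscale c s' \<in> Zspan S'"
    proof (cases "Suc i < d")
      case True
      hence "qscale (c ^ Suc i) s \<in> S'" using memS' isd by blast
      thus ?thesis using eq Z_mem[OF finS'] by metis
    next
      case False
      hence "Suc i = d" using isd by simp
      hence "qscale c s' = qscale (c ^ d) s" using eq by simp
      also have "\<dots> = (\<Sum>j<d. qscale (of_int (- coeff p j)) (qscale (c ^ j) s))"
        unfolding cd by (rule quat_eqI) (simp_all add: sum_distrib_right mult.assoc)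
      also have "\<dots> \<in> Zspan S'"
        by (intro Z_sum ballI Z_int Z_mem[OF finS'] memS') (use isd in auto)
      finally show ?thesis .
    qed
  qed
  have yy: "\<forall>y. (\<forall>s\<in>S. qscale y s \<in> Zspan S) \<longrightarrow> (\<forall>s\<in>S'. qscale y s \<in> Zspan S')"
  proof (intro allI impI ballI)
    fix y s' assume y: "\<forall>s\<in>S. qscale y s \<in> Zspan S" and "s' \<in> S'"
    then obtain i s where isd: "i < d" "s \<in> S" "s' = qscale (c ^ i) s" unfolding S'_def by auto
    have "qscale y s' = qscale (c ^ i) (qscale y s)" using isd by (simp add: qscale_qscale mult.commute)
    thus "qscale y s' \<in> Zspan S'" using scl[OF isd(1)] y isd(2) by simp
  qed
  show ?thesis using finS' sub gen cc yy by blast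
qed

inductive_set gen :: "'k::field quat set \<Rightarrow> 'k set \<Rightarrow> 'k quat set" for S0 T where
  base: "s \<in> S0 \<Longrightarrow> s \<in> gen S0 T"
| scale: "c \<in> T \<Longrightarrow> s \<in> gen S0 T \<Longrightarrow> qscale c s \<in> gen S0 T"

lemma gen_pow: "c \<in> T \<Longrightarrow> s \<in> gen S0 T \<Longrightarrow> qscale (c ^ i) s \<in> gen S0 T"
proof (induction i)
  case 0 thus ?case by (simp add: qscale_one)
next
  case (Suc i)
  have "qscale c (qscale (c ^ i) s) \<in> gen S0 T"
    by (rule gen.scale[OF Suc.prems(1) Suc.IH[OF Suc.prems]])
  thus ?case by (simp add: qscale_qscale)
qed

lemma iterate_ext:
  fixes T :: "'k::field_char_0 set"
  assumes "finite T0" "T0 \<subseteq> T" "\<forall>c\<in>T. algebraic_int c" "finite S0"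
  shows "\<exists>S. finite S \<and> S0 \<subseteq> S \<and> S \<subseteq> gen S0 T \<and> (\<forall>c\<in>T0. \<forall>s\<in>S. qscale c s \<in> Zspan S)"
  using assms(1,2)
proof (induction T0 rule: finite_induct)
  case empty
  show ?case using assms(4) by (intro exI[of _ S0]) (auto intro: gen.base)
next
  case (insert c T0)
  then obtain S where S: "finite S" "S0 \<subseteq> S" "S \<subseteq> gen S0 T" "\<forall>c\<in>T0. \<forall>s\<in>S. qscale c s \<in> Zspan S"
    by auto
  have cT: "c \<in> T" using insert by auto
  obtain S' where S': "finite S'" "S \<subseteq> S'" "\<forall>s'\<in>S'. \<exists>i s. s \<in> S \<and> s' = qscale (c ^ i) s"
     "\<forall>s\<in>S'. qscale c s \<in> Zspan S'"
     "\<forall>y. (\<forall>s\<in>S. qscale y s \<in> Zspan S) \<longrightarrow> (\<forall>s\<in>S'. qscale y s \<in> Zspan S')"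
    using extend_alg_int[OF S(1), of c] assms(3) cT by blast
  have "S' \<subseteq> gen S0 T"
  proof
    fix s' assume "s' \<in> S'"
    then obtain i s where "s \<in> S" "s' = qscale (c ^ i) s" using S'(3) by blast
    thus "s' \<in> gen S0 T" using S(3) gen_pow[OF cT, of s S0 i] by blast
  qed
  moreover have "\<forall>c'\<in>insert c T0. \<forall>s\<in>S'. qscale c' s \<in> Zspan S'" using S'(4,5) S(4) by blast
  moreover have "S0 \<subseteq> S'" using S'(2) S(2) by blast
  ultimately show ?case using S'(1) by blast
qed




lemma bil_expand:
  "qmul a b (qconj (\<Sum>g\<in>G. qscale (\<alpha> g) g)) (\<Sum>h\<in>G. qscale (\<beta> h) h)
   = (\<Sum>g\<in>G. \<Sum>h\<in>G. qscale (\<alpha> g) (qscale (\<beta> h) (qmul a b (qconj g) h)))"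
proof -
  have "qmul a b (qconj (\<Sum>g\<in>G. qscale (\<alpha> g) g)) (\<Sum>h\<in>G. qscale (\<beta> h) h)
     = (\<Sum>h\<in>G. \<Sum>g\<in>G. qscale (\<alpha> g) (qscale (\<beta> h) (qmul a b (qconj g) h)))"
    by (simp add: qconj_sum qconj_scale qmul_sum_left qmul_sum_right qmul_scale_left
        qmul_scale_right qscale_sum qscale_qscale mult.commute)
  also have "\<dots> = (\<Sum>g\<in>G. \<Sum>h\<in>G. qscale (\<alpha> g) (qscale (\<beta> h) (qmul a b (qconj g) h)))"
    by (rule sum.swap)
  finally show ?thesis .
qed

lemma order_mul: "is_order a b \<O> \<Longrightarrow> x \<in> \<O> \<Longrightarrow> y \<in> \<O> \<Longrightarrow> qmul a b x y \<in> \<O>"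
  unfolding is_order_def by blast

lemma order_nrm_alg_int:
  fixes a b :: "'k::field_char_0"
  assumes ord: "is_order a b \<O>" and w: "w \<in> \<O>"
  shows "algebraic_int (qnrm a b w)"
proof -
  from ord obtain G where G: "finite G" "G \<subseteq> \<O>"
    "\<O> = {qsum (\<lambda>g. qscale (c g) g) G | c. \<forall>g\<in>G. c g \<in> ring_of_integers}"
    unfolding is_order_def by blast
  have rep: "\<exists>cc. (\<forall>g\<in>G. cc g \<in> ring_of_integers) \<and> x = (\<Sum>g\<in>G. qscale (cc g) g)" if "x \<in> \<O>" for x
    using that G(3) qsum_eq[OF G(1)] by auto
  have "\<forall>g. \<exists>cc. g \<in> G \<longrightarrow> (\<forall>h\<in>G. cc h \<in> ring_of_integers) \<and> qmul a b w g = (\<Sum>h\<in>G. qscale (cc h) h)"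
  proof
    fix g show "\<exists>cc. g \<in> G \<longrightarrow> (\<forall>h\<in>G. cc h \<in> ring_of_integers) \<and> qmul a b w g = (\<Sum>h\<in>G. qscale (cc h) h)"
    proof (cases "g \<in> G")
      case True
      hence "g \<in> \<O>" using G(2) by blast
      hence "qmul a b w g \<in> \<O>" using order_mul[OF ord w] by blast
      thus ?thesis using rep by blast
    qed auto
  qed
  then obtain C where C: "\<And>g. g \<in> G \<Longrightarrow> (\<forall>h\<in>G. C g h \<in> ring_of_integers) \<and> qmul a b w g = (\<Sum>h\<in>G. qscale (C g h) h)"
    by metis
  have "qone \<in> \<O>" using ord unfolding is_order_def by blast
  then obtain e where e: "\<forall>g\<in>G. e g \<in> ring_of_integers" "qone = (\<Sum>g\<in>G. qscale (e g) g)"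
    using rep by blast
  define T where "T = (\<lambda>(g,h). C g h) ` (G \<times> G) \<union> e ` G"
  define S0 where "S0 = (\<lambda>(g,h). qmul a b (qconj g) h) ` (G \<times> G)"
  have finT: "finite T" unfolding T_def using G(1) by simp
  have CT: "C g h \<in> T" if "g \<in> G" "h \<in> G" for g h unfolding T_def using that by force
  have eT: "e g \<in> T" if "g \<in> G" for g unfolding T_def using that by force
  have algT: "\<forall>c\<in>T. algebraic_int c"
    unfolding T_def using C e(1) by (auto simp: ring_of_integers_def)
  have finS0: "finite S0" unfolding S0_def using G(1) by simp
  obtain S where S: "finite S" "S0 \<subseteq> S" "S \<subseteq> gen S0 T" "\<forall>c\<in>T. \<forall>s\<in>S. qscale c s \<in> Zspan S"
    using iterate_ext[OF finT order_refl algT finS0] by blast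
  have Scl: "qscale c z \<in> Zspan S" if "c \<in> T" "z \<in> Zspan S" for c z
    using Z_lin[OF that(2)] S(4) that(1) by blast
  have S0Z: "qmul a b (qconj g) h \<in> Zspan S" if "g \<in> G" "h \<in> G" for g h
    using Z_mem[OF S(1)] S(2) that unfolding S0_def by blast
  have inZ: "(\<Sum>g\<in>G. \<Sum>h\<in>G. qscale (\<alpha> g) (qscale (\<beta> h) (qmul a b (qconj g) h))) \<in> Zspan S"
    if "\<And>g. g \<in> G \<Longrightarrow> \<alpha> g \<in> T" "\<And>h. h \<in> G \<Longrightarrow> \<beta> h \<in> T" for \<alpha> \<beta>
    by (intro Z_sum ballI Scl S0Z that)
  define N where "N = qnrm a b w"
  have genZ: "qscale N z \<in> Zspan S" if "z \<in> gen S0 T" for z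
    using that
  proof (induction rule: gen.induct)
    case (base s)
    then obtain g h where gh: "g \<in> G" "h \<in> G" "s = qmul a b (qconj g) h" unfolding S0_def by auto
    have kk: "qscale N s = qmul a b (qconj (qmul a b w g)) (qmul a b w h)"
      unfolding N_def gh(3) by (rule key_identity[symmetric])
    have eqg: "qmul a b w g = (\<Sum>g'\<in>G. qscale (C g g') g')" using C[OF gh(1)] by blast
    have eqh: "qmul a b w h = (\<Sum>h'\<in>G. qscale (C h h') h')" using C[OF gh(2)] by blast
    have "qmul a b (qconj (\<Sum>g'\<in>G. qscale (C g g') g')) (\<Sum>h'\<in>G. qscale (C h h') h')
       = (\<Sum>g'\<in>G. \<Sum>h'\<in>G. qscale (C g g') (qscale (C h h') (qmul a b (qconj g') h')))"
      by (rule bil_expand)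
    hence "qscale N s = (\<Sum>g'\<in>G. \<Sum>h'\<in>G. qscale (C g g') (qscale (C h h') (qmul a b (qconj g') h')))"
      using kk unfolding eqg eqh by simp
    also have "\<dots> \<in> Zspan S"
    proof (rule inZ)
      show "\<And>g'. g' \<in> G \<Longrightarrow> C g g' \<in> T" using CT gh(1) by blast
      show "\<And>h'. h' \<in> G \<Longrightarrow> C h h' \<in> T" using CT gh(2) by blast
    qed
    finally show ?case .
  next
    case (scale c s)
    have "qscale N (qscale c s) = qscale c (qscale N s)" by (simp add: qscale_qscale mult.commute)
    thus ?case using Scl[OF scale(1) scale(3)] by simp
  qed
  have "qone = qmul a b (qconj qone) (qone :: 'k quat)" by (simp add: qone_def)
  also have "\<dots> = (\<Sum>g\<in>G. \<Sum>h\<in>G. qscale (e g) (qscale (e h) (qmul a b (qconj g) h)))"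
    by (subst (1 2) e(2)) (rule bil_expand)
  also have "\<dots> \<in> Zspan S" by (rule inZ) (use eT in blast)+
  finally have oneZ: "qone \<in> Zspan S" .
  have "\<exists>s\<in>S. s \<noteq> 0"
  proof (rule ccontr)
    assume "\<not> (\<exists>s\<in>S. s \<noteq> 0)"
    hence "\<forall>s\<in>S. s = 0" by blast
    hence "\<forall>z\<in>Zspan S. z = 0" unfolding Zspan_def by (auto intro!: sum.neutral simp: qscale_zero)
    thus False using oneZ by (auto simp: qone_def zero_quat_def qzero_def)
  qed
  then obtain s0 where "s0 \<in> S" "s0 \<noteq> 0" by blast
  moreover have "\<forall>s\<in>S. qscale N s \<in> Zspan S" using genZ S(3) by blast
  ultimately show ?thesis unfolding N_def[symmetric] using set_algebraic_int[OF S(1)] by blast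
qed




lemma IP_zero: "0 \<in> ideal_prod I J"
  unfolding ideal_prod_def by (rule CollectI, rule exI[of _ 0]) auto

lemma IP_prod: "t \<in> I \<Longrightarrow> s \<in> J \<Longrightarrow> t * s \<in> ideal_prod I J"
  unfolding ideal_prod_def
  by (rule CollectI, rule exI[of _ 1], rule exI[of _ "\<lambda>_. t"], rule exI[of _ "\<lambda>_. s"]) auto

lemma IP_add_prod:
  assumes "x \<in> ideal_prod I J" "t0 \<in> I" "s0 \<in> J"
  shows "x + t0 * s0 \<in> ideal_prod I J"
proof -
  obtain n :: nat and t s where x: "x = (\<Sum>i<n. t i * s i)" "\<forall>i<n. t i \<in> I \<and> s i \<in> J"
    using assms(1) unfolding ideal_prod_def by blast
  define t' where "t' = t(n := t0)"
  define s' where "s' = s(n := s0)"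
  have "x + t0 * s0 = (\<Sum>i<Suc n. t' i * s' i)"
    unfolding x t'_def s'_def by simp
  moreover have "\<forall>i<Suc n. t' i \<in> I \<and> s' i \<in> J"
    using x(2) assms(2,3) unfolding t'_def s'_def by (auto simp: less_Suc_eq)
  ultimately show ?thesis unfolding ideal_prod_def by blast
qed

lemma IP_add:
  assumes "x \<in> ideal_prod I J" "y \<in> ideal_prod I J"
  shows "x + y \<in> ideal_prod I J"
proof -
  obtain n :: nat and t s where y: "y = (\<Sum>i<n. t i * s i)" "\<forall>i<n. t i \<in> I \<and> s i \<in> J"
    using assms(2) unfolding ideal_prod_def by blast
  have "\<forall>m\<le>n. x + (\<Sum>i<m. t i * s i) \<in> ideal_prod I J"
  proof (intro allI impI)
    fix m assume "m \<le> n"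
    thus "x + (\<Sum>i<m. t i * s i) \<in> ideal_prod I J"
    proof (induction m)
      case 0 thus ?case using assms(1) by simp
    next
      case (Suc m)
      hence "x + (\<Sum>i<m. t i * s i) + t m * s m \<in> ideal_prod I J"
        using y(2) by (intro IP_add_prod) auto
      thus ?case by (simp add: add.assoc)
    qed
  qed
  thus ?thesis using y(1) by blast
qed

lemma IP_sum: "(\<forall>i\<in>A. f i \<in> ideal_prod I J) \<Longrightarrow> sum f A \<in> ideal_prod I J"
  by (induction A rule: infinite_finite_induct) (auto simp: IP_zero IP_add)

lemma IP_neg:
  assumes "x \<in> ideal_prod I J" and neg: "\<And>t. t \<in> I \<Longrightarrow> - t \<in> I"
  shows "- x \<in> ideal_prod I J"
proof -
  obtain n :: nat and t s where x: "x = (\<Sum>i<n. t i * s i)" "\<forall>i<n. t i \<in> I \<and> s i \<in> J"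
    using assms(1) unfolding ideal_prod_def by blast
  have "- x = (\<Sum>i<n. (\<lambda>i. - t i) i * s i)" unfolding x by (simp add: sum_negf)
  moreover have "(\<Sum>i<n. (\<lambda>i. - t i) i * s i) \<in> ideal_prod I J"
    unfolding ideal_prod_def
    by (rule CollectI, rule exI[of _ n], rule exI[of _ "\<lambda>i. - t i"], rule exI[of _ s])
       (use x(2) neg in auto)
  ultimately show ?thesis by simp
qed

lemma ok_neg: "ok_ideal I \<Longrightarrow> t \<in> I \<Longrightarrow> - t \<in> I"
proof -
  assume I: "ok_ideal I" and t: "t \<in> I"
  have "algebraic_int (-1 :: 'a)" by (intro algebraic_int_minus int_imp_algebraic_int) auto
  hence "(-1) * t \<in> I" using I t unfolding ok_ideal_def ring_of_integers_def by blast
  thus ?thesis by simp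
qed

lemma ok_mul: "ok_ideal I \<Longrightarrow> algebraic_int r \<Longrightarrow> t \<in> I \<Longrightarrow> r * t \<in> I"
  unfolding ok_ideal_def ring_of_integers_def by blast

definition Bf :: "'k::field \<Rightarrow> 'k \<Rightarrow> 'k quat \<Rightarrow> 'k quat \<Rightarrow> 'k" where
  "Bf a b x y = q0 x * q0 y - a * q1 x * q1 y - b * q2 x * q2 y + a * b * q3 x * q3 y"

lemma nrm_add: "qnrm a b (x + y) = qnrm a b x + qnrm a b y + 2 * Bf a b x y"
  unfolding qnrm_comps Bf_def by (simp add: power2_eq_square algebra_simps)

lemma nrm_scale: "qnrm a b (qscale t w) = t * t * qnrm a b w"
  unfolding qnrm_comps by (simp add: power2_eq_square algebra_simps)

lemma Bf_add_left: "Bf a b (x + z) y = Bf a b x y + Bf a b z y"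
  unfolding Bf_def by (simp add: algebra_simps)

lemma Bf_zero_left: "Bf a b 0 y = 0"
  unfolding Bf_def by simp

lemma Bf_sum_left: "Bf a b (sum f S) y = (\<Sum>s\<in>S. Bf a b (f s) y)"
  by (induction S rule: infinite_finite_induct) (simp_all add: Bf_add_left Bf_zero_left)

lemma Bf_scale_left: "Bf a b (qscale t x) y = t * Bf a b x y"
  unfolding Bf_def by (simp add: algebra_simps)

lemma Bf_scale_right: "Bf a b x (qscale t y) = t * Bf a b x y"
  unfolding Bf_def by (simp add: algebra_simps)

lemma nrm_zero: "qnrm a b 0 = 0"
  by (simp add: zero_quat_def qzero_def)

lemma tr_identity: "qnrm a b (qadd g (qneg qone)) = qnrm a b g - qtr g + 1"
  by (cases g) (simp add: qone_def power2_eq_square algebra_simps)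

theorem lemma7p2:
  fixes a b :: "'k::field_char_0" and \<O> :: "'k quat set" and I :: "'k set"
    and \<gamma> :: "'k quat"
  assumes "number_field TYPE('k)"
    and "a \<noteq> 0" and "b \<noteq> 0"
    and "is_order a b \<O>"
    and "ok_ideal I"
    and "\<gamma> \<in> order_norm_one_level a b \<O> I"
  shows "qtr \<gamma> - 2 \<in> ideal_prod I I"
proof -
  have ord: "is_order a b \<O>" and I: "ok_ideal I" by fact+
  from assms(6) have g: "\<gamma> \<in> \<O>" "qnrm a b \<gamma> = 1" "qadd \<gamma> (qneg qone) \<in> ideal_times_order I \<O>"
    unfolding order_norm_one_level_def by auto
  then obtain n :: nat and t w where tw: "qadd \<gamma> (qneg qone) = qsum (\<lambda>j. qscale (t j) (w j)) {..<n}"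
    "\<forall>j<n. t j \<in> I \<and> w j \<in> \<O>"
    unfolding ideal_times_order_def by blast
  have Nint: "algebraic_int (qnrm a b u)" if "u \<in> \<O>" for u
    using order_nrm_alg_int[OF ord that] .
  have addO: "x + y \<in> \<O>" if "x \<in> \<O>" "y \<in> \<O>" for x y
    using ord that unfolding is_order_def plus_quat_def by blast
  have Iint: "algebraic_int x" if "x \<in> I" for x
    using I that unfolding ok_ideal_def ring_of_integers_def by blast
  have tI: "t j \<in> I" "w j \<in> \<O>" if "j < n" for j using tw(2) that by auto
  have main: "qnrm a b (\<Sum>j<m. qscale (t j) (w j)) \<in> ideal_prod I I" if "m \<le> n" for m
    using that
  proof (induction m)
    case 0 thus ?case by (simp add: nrm_zero IP_zero)
  next
    case (Suc m)
    hence m: "m < n" by simp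
    define X where "X = (\<Sum>j<m. qscale (t j) (w j))"
    have IH: "qnrm a b X \<in> ideal_prod I I" using Suc X_def by simp
    let ?t = "t m" and ?w = "w m"
    have "qnrm a b (\<Sum>j<Suc m. qscale (t j) (w j)) = qnrm a b (X + qscale ?t ?w)"
      unfolding X_def by simp
    also have "\<dots> = qnrm a b X + ?t * ?t * qnrm a b ?w + ?t * (2 * Bf a b X ?w)"
      by (simp add: nrm_add nrm_scale Bf_scale_right)
    also have "2 * Bf a b X ?w = (\<Sum>j<m. t j * (2 * Bf a b (w j) ?w))"
      unfolding X_def Bf_sum_left by (simp add: Bf_scale_left sum_distrib_left algebra_simps)
    also have "\<dots> = (\<Sum>j<m. t j * (qnrm a b (w j + ?w) - qnrm a b (w j) - qnrm a b ?w))"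
      by (simp add: nrm_add)
    finally have eq: "qnrm a b (\<Sum>j<Suc m. qscale (t j) (w j)) = qnrm a b X + ?t * (qnrm a b ?w * ?t)
       + (\<Sum>j<m. ?t * (qnrm a b (w j + ?w) * t j) + (- ?t) * (qnrm a b (w j) * t j)
           + (- ?t) * (qnrm a b ?w * t j))"
      by (simp add: sum_distrib_left algebra_simps)
    have tm: "?t \<in> I" "?w \<in> \<O>" "- ?t \<in> I" using tI[OF m] ok_neg[OF I] by auto
    have "?t * (qnrm a b ?w * ?t) \<in> ideal_prod I I"
      by (intro IP_prod tm ok_mul[OF I] Nint)
    moreover have "(\<Sum>j<m. ?t * (qnrm a b (w j + ?w) * t j) + (- ?t) * (qnrm a b (w j) * t j)
           + (- ?t) * (qnrm a b ?w * t j)) \<in> ideal_prod I I"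
    proof (intro IP_sum ballI)
      fix j assume "j \<in> {..<m}"
      hence j: "j < n" using m by simp
      show "?t * (qnrm a b (w j + ?w) * t j) + (- ?t) * (qnrm a b (w j) * t j)
           + (- ?t) * (qnrm a b ?w * t j) \<in> ideal_prod I I"
        using tI[OF j] tm by (intro IP_add IP_prod ok_mul[OF I] Nint addO)
    qed
    ultimately show ?case unfolding eq using IH by (intro IP_add)
  qed
  have "qtr \<gamma> - 2 = - qnrm a b (qadd \<gamma> (qneg qone))"
    using tr_identity[of a b \<gamma>] g(2) by simp
  also have "qadd \<gamma> (qneg qone) = (\<Sum>j<n. qscale (t j) (w j))"
    using tw(1) by (simp add: qsum_eq[OF finite_lessThan])
  finally show ?thesis using IP_neg[OF main[OF order_refl] ok_neg[OF I]] by simp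
qed


end
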